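(* Let $X$ be a pure finite $n$-dimensional simplicial complex. Define $M_{-1}=1$ and, for $0\le k\le n-1$, $M_k=\operatorname{Fill}_k((k+1)M_{k-1}+1)$. Let $0\le k\le n-1$. If $\operatorname{Sys}_j(X)>(j+1)M_{j-1}+1$ for every $0\le j\le k$, then $\operatorname{Crad}_k(X)\le M_k$.
   Context: $X(-1)=\{\emptyset\}$. Over $\mathbb{F}_2$: $C_k(X)$ has basis $X(k)$ (chains identified with subsets, $|A|$ the size), $\partial_k\sigma=\sum_{\tau\subset\sigma,|\tau|=|\sigma|-1}\tau$ (so $\partial_0\{u\}=\emptyset$), $Z_k=\ker\partial_k$, $B_k=\operatorname{Im}\partial_{k+1}$. $\operatorname{Sys}_k(X)=\min\{|A|:A\in Z_k\setminus B_k\}$ ($\infty$ if $Z_k=B_k$). For $B\in B_k$, $\operatorname{Fill}_k(B)=\min\{|A|:A\in C_{k+1},\partial_{k+1}A=B\}$; for $B\in Z_k\setminus B_k$, $\operatorname{Fill}_k(B)=\infty$; $\operatorname{Fill}_k(M)=\max\{\operatorname{Fill}_k(B):B\in Z_k,|B|\le M\}$. Cone function: a $(-1)$-cone function with apex $v$ maps $\emptyset\mapsto\{v\}$; for $k\ge0$ a $k$-cone function with apex $v$ is a linear map $\operatorname{Cone}^v_k:\bigoplus_{j=-1}^kC_j\to\bigoplus_{j=-1}^kC_{j+1}$ (sending $C_j$ into $C_{j+1}$) restricting to a $(k-1)$-cone function with apex $v$ and satisfying $\partial_{k+1}\operatorname{Cone}^v_k(A)=A+\operatorname{Cone}^v_k(\partial_kA)$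 for $A\in C_k$. $\operatorname{Vol}(\operatorname{Cone}^v_k)=\max_{\tau\in X(k)}|\operatorname{Cone}^v_k(\tau)|$; $\operatorname{Crad}_k(X)$ is the minimal volume over all vertices $v$ and all $k$-cone functions with apex $v$ ($\infty$ if none exist). *)

theory Defs
  imports Main "HOL-Library.Extended_Nat"
begin

text \<open>A face of dimension k has k+1 vertices.
Chains over F_2 are sets of faces; addition is symmetric difference.\<close>

definition simplicial_complex :: "'a set set \<Rightarrow> bool" where
  "simplicial_complex X \<longleftrightarrow> {} \<in> X \<and> (\<forall>\<sigma>\<in>X. \<forall>\<tau>. \<tau> \<subseteq> \<sigma> \<longrightarrow> \<tau> \<in> X)"

definition pure_complex :: "'a set set \<Rightarrow> nat \<Rightarrow> bool" where
  "pure_complex X n \<longleftrightarrow> simplicial_complex X \<and> finite X \<and>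
     (\<forall>\<sigma>\<in>X. card \<sigma> \<le> n + 1) \<and>
     (\<forall>\<sigma>\<in>X. \<exists>\<tau>\<in>X. \<sigma> \<subseteq> \<tau> \<and> card \<tau> = n + 1)"

text \<open>Faces with exactly d vertices (so X(k) = faces_card X (k+1), X(-1) = faces_card X 0).\<close>
definition faces_card :: "'a set set \<Rightarrow> nat \<Rightarrow> 'a set set" where
  "faces_card X d = {\<sigma>\<in>X. card \<sigma> = d}"

text \<open>F_2-sum of the chains f \<sigma>, \<sigma> \<in> A.\<close>
definition sdsum :: "('b \<Rightarrow> 'a set set) \<Rightarrow> 'b set \<Rightarrow> 'a set set" where
  "sdsum f A = {\<tau>. odd (card {\<sigma>\<in>A. \<tau> \<in> f \<sigma>})}"

definition facets :: "'a set \<Rightarrow> 'a set set" where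
  "facets \<sigma> = (\<lambda>v. \<sigma> - {v}) ` \<sigma>"

definition bd :: "'a set set \<Rightarrow> 'a set set" where
  "bd A = sdsum facets A"

definition Zk :: "'a set set \<Rightarrow> nat \<Rightarrow> 'a set set set" where
  "Zk X k = {A. A \<subseteq> faces_card X (k+1) \<and> bd A = {}}"

definition Bk :: "'a set set \<Rightarrow> nat \<Rightarrow> 'a set set set" where
  "Bk X k = {bd A | A. A \<subseteq> faces_card X (k+2)}"

definition Sys :: "'a set set \<Rightarrow> nat \<Rightarrow> enat" where
  "Sys X k = (INF A \<in> Zk X k - Bk X k. enat (card A))"

text \<open>Filling size of a single cycle (\<infinity> if it is not a boundary).\<close>
definition FillB :: "'a set set \<Rightarrow> nat \<Rightarrow> 'a set set \<Rightarrow> enat" where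
  "FillB X k B = (INF A \<in> {A. A \<subseteq> faces_card X (k+2) \<and> bd A = B}. enat (card A))"

definition Fill :: "'a set set \<Rightarrow> nat \<Rightarrow> enat \<Rightarrow> enat" where
  "Fill X k M = (SUP B \<in> {B. B \<in> Zk X k \<and> enat (card B) \<le> M}. FillB X k B)"

text \<open>Mseq X 0 = M_{-1} = 1, Mseq X (Suc k) = M_k = Fill_k((k+1) M_{k-1} + 1).\<close>
fun Mseq :: "'a set set \<Rightarrow> nat \<Rightarrow> enat" where
  "Mseq X 0 = 1"
| "Mseq X (Suc k) = Fill X k (of_nat (k+1) * Mseq X k + 1)"

text \<open>A k-cone function with apex v, given by its values c \<sigma> on the basis faces
\<sigma> of dimension -1..k (extended linearly over F_2 via sdsum).\<close>
definition cone_function :: "'a set set \<Rightarrow> nat \<Rightarrow> 'a \<Rightarrow> ('a set \<Rightarrow> 'a set set) \<Rightarrow> bool" where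
  "cone_function X k v c \<longleftrightarrow>
     {v} \<in> X \<and> c {} = {{v}} \<and>
     (\<forall>d\<le>k+1. \<forall>\<sigma>\<in>faces_card X d. c \<sigma> \<subseteq> faces_card X (d+1)) \<and>
     (\<forall>j\<le>k. \<forall>A. A \<subseteq> faces_card X (j+1) \<longrightarrow> bd (sdsum c A) = A \<union> sdsum c (bd A) - A \<inter> sdsum c (bd A))"

definition Vol :: "'a set set \<Rightarrow> nat \<Rightarrow> ('a set \<Rightarrow> 'a set set) \<Rightarrow> enat" where
  "Vol X k c = (SUP \<tau> \<in> faces_card X (k+1). enat (card (c \<tau>)))"

definition Crad :: "'a set set \<Rightarrow> nat \<Rightarrow> enat" where
  "Crad X k = (INF p \<in> {(v, c). cone_function X k v c}. Vol X k (snd p))"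

end

theory Submission
  imports Defs
begin

definition symd :: "'b set \<Rightarrow> 'b set \<Rightarrow> 'b set" where
  "symd A B = A \<union> B - A \<inter> B"

lemma sdsum_empty[simp]: "sdsum f {} = {}"
  by (simp add: sdsum_def)

lemma sdsum_insert:
  assumes "finite A" "a \<notin> A"
  shows "sdsum f (insert a A) = symd (f a) (sdsum f A)"
proof -
  have "\<And>t. {s\<in>insert a A. t \<in> f s} = (if t \<in> f a then insert a {s\<in>A. t \<in> f s} else {s\<in>A. t \<in> f s})"
    by auto
  then show ?thesis using assms by (auto simp: sdsum_def symd_def)
qed

lemma sdsum_single[simp]: "sdsum f {a} = f a"
  using sdsum_insert[of "{}" a f] by (simp add: symd_def)

lemma sdsum_cong: "(\<And>s. s \<in> A \<Longrightarrow> f s = g s) \<Longrightarrow> sdsum f A = sdsum g A"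
proof -
  assume h: "\<And>s. s \<in> A \<Longrightarrow> f s = g s"
  have "\<And>t. {s\<in>A. t \<in> f s} = {s\<in>A. t \<in> g s}" using h by auto
  then show ?thesis by (simp add: sdsum_def)
qed

lemma sdsum_subset: "sdsum f A \<subseteq> (\<Union>s\<in>A. f s)"
proof
  fix t assume "t \<in> sdsum f A"
  then have "odd (card {s\<in>A. t \<in> f s})" by (simp add: sdsum_def)
  then have "{s\<in>A. t \<in> f s} \<noteq> {}" by (metis card.empty even_zero)
  then show "t \<in> (\<Union>s\<in>A. f s)" by auto
qed

lemma sdsum_finite: "finite A \<Longrightarrow> (\<And>s. s \<in> A \<Longrightarrow> finite (f s)) \<Longrightarrow> finite (sdsum f A)"
  by (meson finite_UN_I finite_subset sdsum_subset)

lemma sdsum_id: "finite A \<Longrightarrow> sdsum (\<lambda>s. {s}) A = A"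
proof (induction A rule: finite_induct)
  case empty then show ?case by simp
next
  case (insert a A) then show ?case by (auto simp: sdsum_insert symd_def)
qed

lemma sdsum_pw:
  assumes "finite A"
  shows "sdsum (\<lambda>s. symd (f s) (g s)) A = symd (sdsum f A) (sdsum g A)"
  using assms
proof (induction A rule: finite_induct)
  case empty then show ?case by (simp add: symd_def)
next
  case (insert a A) then show ?case by (simp add: sdsum_insert) (auto simp: symd_def)
qed

lemma sdsum_symd:
  assumes "finite A" "finite B"
  shows "sdsum f (symd A B) = symd (sdsum f A) (sdsum f B)"
  using assms(1)
proof (induction A rule: finite_induct)
  case empty then show ?case by (simp add: symd_def)
next
  case (insert a A)
  have fin: "finite (symd A B)" using insert assms by (simp add: symd_def)
  show ?case
  proof (cases "a \<in> B")
    case True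
    have e: "symd (insert a A) B = symd A B - {a}" using True insert by (auto simp: symd_def)
    have e2: "symd A B = insert a (symd A B - {a})" using True insert by (auto simp: symd_def)
    have "sdsum f (symd A B) = symd (f a) (sdsum f (symd A B - {a}))"
      by (subst e2, rule sdsum_insert) (use fin in auto)
    then show ?thesis using insert e by (simp add: sdsum_insert) (auto simp: symd_def)
  next
    case False
    have e: "symd (insert a A) B = insert a (symd A B)" using False insert by (auto simp: symd_def)
    have "a \<notin> symd A B" using False insert by (auto simp: symd_def)
    then show ?thesis using insert e fin by (simp add: sdsum_insert) (auto simp: symd_def)
  qed
qed

lemma sdsum_comp:
  assumes "finite A" "\<And>s. s \<in> A \<Longrightarrow> finite (f s)"
  shows "sdsum g (sdsum f A) = sdsum (\<lambda>s. sdsum g (f s)) A"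
  using assms
proof (induction A rule: finite_induct)
  case empty then show ?case by simp
next
  case (insert a A)
  have "finite (sdsum f A)" using insert by (intro sdsum_finite) auto
  then show ?case using insert by (simp add: sdsum_insert sdsum_symd)
qed

lemma card_sdsum:
  assumes "finite A" "\<And>s. s \<in> A \<Longrightarrow> finite (f s)"
  shows "card (sdsum f A) \<le> (\<Sum>s\<in>A. card (f s))"
proof -
  have "card (sdsum f A) \<le> card (\<Union>s\<in>A. f s)"
    using assms sdsum_subset[of f A] by (intro card_mono) auto
  also have "\<dots> \<le> (\<Sum>s\<in>A. card (f s))" using assms(1) by (rule card_UN_le)
  finally show ?thesis .
qed

lemma bdbd:
  assumes "finite s"
  shows "sdsum facets (facets s) = {}"
proof -
  have "even (card {t\<in>facets s. r \<in> facets t})" for r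
  proof -
    define D where "D = {a\<in>s. r \<in> facets (s - {a})}"
    have inj: "inj_on (\<lambda>a. s - {a}) s" by (auto simp: inj_on_def)
    have "{t\<in>facets s. r \<in> facets t} = (\<lambda>a. s - {a}) ` D"
      by (auto simp: D_def facets_def)
    then have c: "card {t\<in>facets s. r \<in> facets t} = card D"
      by (metis (no_types, lifting) D_def card_image inj inj_on_subset mem_Collect_eq subsetI)
    show ?thesis
    proof (cases "D = {}")
      case True then show ?thesis using c by simp
    next
      case False
      then obtain a where a: "a \<in> D" by blast
      then obtain b where b: "b \<in> s" "b \<noteq> a" "r = s - {a} - {b}" "a \<in> s"
        by (auto simp: D_def facets_def)
      have "D = {a, b}"
      proof
        show "{a, b} \<subseteq> D" using a b by (auto simp: D_def facets_def)
        show "D \<subseteq> {a, b}"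
        proof
          fix x assume "x \<in> D"
          then obtain y where "y \<in> s" "y \<noteq> x" "r = s - {x} - {y}" "x \<in> s"
            by (auto simp: D_def facets_def)
          then show "x \<in> {a,b}" using b by blast
        qed
      qed
      then show ?thesis using c b by simp
    qed
  qed
  then show ?thesis by (simp add: sdsum_def)
qed

lemma card_facets: "finite s \<Longrightarrow> card (facets s) \<le> card s"
  unfolding facets_def by (rule card_image_le)

lemma Inf_enat_in: "S \<noteq> {} \<Longrightarrow> (Inf S :: enat) \<in> S"
  unfolding Inf_enat_def by (auto intro: LeastI)

definition cinv :: "'a set set \<Rightarrow> 'a \<Rightarrow> nat \<Rightarrow> ('a set \<Rightarrow> 'a set set) \<Rightarrow> bool" where
  "cinv X v j c \<longleftrightarrow> c {} = {{v}} \<and> (\<forall>t\<in>X. card t \<le> j \<longrightarrow>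
     c t \<subseteq> faces_card X (card t + 1) \<and> bd (c t) = symd {t} (sdsum c (facets t)) \<and>
     enat (card (c t)) \<le> Mseq X (card t))"

lemma facet_props:
  assumes "simplicial_complex X" "s \<in> X" "finite s" "t \<in> facets s"
  shows "t \<in> X" "card t = card s - 1" "card s \<ge> 1" "finite t"
  using assms by (auto simp: facets_def simplicial_complex_def card_gt_0_iff Suc_le_eq)

lemma bd_lin_chain:
  assumes sc: "simplicial_complex X" and fX: "finite X" and fin: "\<forall>s\<in>X. finite s"
    and F: "F \<subseteq> X" "finite F"
    and cfin: "\<And>t. t \<in> F \<Longrightarrow> finite (c t)"
    and h: "\<And>t. t \<in> F \<Longrightarrow> bd (c t) = symd {t} (sdsum c (facets t))"
  shows "bd (sdsum c F) = symd F (sdsum c (bd F))"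
proof -
  have "bd (sdsum c F) = sdsum (\<lambda>t. bd (c t)) F"
    unfolding bd_def using F cfin by (intro sdsum_comp) auto
  also have "\<dots> = sdsum (\<lambda>t. symd {t} (sdsum c (facets t))) F"
    using h by (rule sdsum_cong)
  also have "\<dots> = symd F (sdsum (\<lambda>t. sdsum c (facets t)) F)"
    using F by (simp add: sdsum_pw sdsum_id)
  also have "sdsum (\<lambda>t. sdsum c (facets t)) F = sdsum c (bd F)"
    unfolding bd_def using F fin by (intro sdsum_comp[symmetric]) (auto simp: facets_def)
  finally show ?thesis .
qed

lemma step:
  assumes sc: "simplicial_complex X" and fX: "finite X" and fin: "\<forall>s\<in>X. finite s"
    and inv: "cinv X v j c"
    and M: "Mseq X j = enat m"
    and sys: "enat ((j+1)*m+1) < Sys X j"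
  shows "\<exists>c'. cinv X v (Suc j) c'"
proof -
  define P where "P s A \<longleftrightarrow> A \<subseteq> faces_card X (card s+1) \<and> bd A = symd {s} (sdsum c (facets s))
     \<and> enat (card A) \<le> Mseq X (card s)" for s A
  have ex: "\<exists>A. P s A" if s: "s \<in> X" "card s = Suc j" for s
  proof -
    define F where "F = facets s"
    define S where "S = sdsum c F"
    define B where "B = symd {s} S"
    have fs: "finite s" using fin s by auto
    have FX: "F \<subseteq> X" and Fc: "\<And>t. t \<in> F \<Longrightarrow> card t = j" and fF: "finite F"
      using facet_props[OF sc s(1) fs] s fs by (auto simp: F_def facets_def)
    have ct: "c t \<subseteq> faces_card X (j+1)" "bd (c t) = symd {t} (sdsum c (facets t))"
      "enat (card (c t)) \<le> enat m" if "t \<in> F" for t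
      using inv FX Fc[OF that] that M unfolding cinv_def by auto
    have cfin: "finite (c t)" if "t \<in> F" for t
    proof -
      have "c t \<subseteq> X" using ct(1)[OF that] by (auto simp: faces_card_def)
      then show ?thesis using fX finite_subset by blast
    qed
    have fS: "finite S" unfolding S_def using fF cfin by (rule sdsum_finite)
    have SX: "S \<subseteq> faces_card X (j+1)" unfolding S_def using sdsum_subset[of c F] ct(1) by blast
    have BX: "B \<subseteq> faces_card X (j+1)" using SX s unfolding B_def symd_def faces_card_def by auto
    have bdS: "bd S = F"
    proof -
      have "bd S = symd F (sdsum c (bd F))" unfolding S_def
        by (rule bd_lin_chain[OF sc fX fin FX fF cfin ct(2)])
      moreover have "bd F = {}" unfolding F_def bd_def using fs by (rule bdbd)
      ultimately show ?thesis by (simp add: symd_def)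
    qed
    have bdB: "bd B = {}" unfolding B_def bd_def using fS
      by (subst sdsum_symd) (auto simp: bdS[unfolded bd_def] F_def symd_def)
    have BZ: "B \<in> Zk X j" using BX bdB by (simp add: Zk_def)
    have "card S \<le> (\<Sum>t\<in>F. card (c t))" unfolding S_def using fF cfin by (rule card_sdsum)
    also have "\<dots> \<le> card F * m" using sum_bounded_above[of F "\<lambda>t. card (c t)" m] ct(3) by simp
    also have "\<dots> \<le> (j+1) * m" using card_facets[OF fs] s unfolding F_def by (intro mult_le_mono1) simp
    finally have cS: "card S \<le> (j+1)*m" .
    have "card B \<le> card (insert s S)" using fS unfolding B_def symd_def by (intro card_mono) auto
    also have "\<dots> \<le> Suc (card S)" using fS by (simp add: card_insert_if)
    finally have cB: "card B \<le> (j+1)*m + 1" using cS by simp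
    have eq: "of_nat (j+1) * Mseq X j + 1 = enat ((j+1)*m+1)"
      using M by (simp add: of_nat_eq_enat one_enat_def)
    have "B \<in> Bk X j"
    proof (rule ccontr)
      assume "B \<notin> Bk X j"
      then have "Sys X j \<le> enat (card B)" using BZ unfolding Sys_def by (intro INF_lower) auto
      then show False using sys cB by (meson enat_ord_simps(1) leD le_less_trans)
    qed
    then obtain A0 where "A0 \<subseteq> faces_card X (j+2)" "bd A0 = B" by (auto simp: Bk_def)
    then have ne: "{A. A \<subseteq> faces_card X (j+2) \<and> bd A = B} \<noteq> {}" by auto
    have "FillB X j B \<in> (\<lambda>A. enat (card A)) ` {A. A \<subseteq> faces_card X (j+2) \<and> bd A = B}"
      unfolding FillB_def by (rule Inf_enat_in) (use ne in auto)
    then obtain A where A: "A \<subseteq> faces_card X (j+2)" "bd A = B" "enat (card A) = FillB X j B" by auto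
    have "FillB X j B \<le> Fill X j (of_nat (j+1) * Mseq X j + 1)"
      unfolding Fill_def using BZ cB eq by (intro SUP_upper) auto
    also have "\<dots> = Mseq X (Suc j)" by simp
    finally have "P s A" using A s unfolding P_def B_def S_def F_def by auto
    then show ?thesis by blast
  qed
  define c' where "c' s = (if s \<in> X \<and> card s = Suc j then (SOME A. P s A) else c s)" for s
  have sd_eq: "sdsum c' (facets s) = sdsum c (facets s)" if "s \<in> X" "card s \<le> Suc j" for s
  proof (rule sdsum_cong)
    fix t assume "t \<in> facets s"
    then have "card t = card s - 1" "card s \<ge> 1" using facet_props[OF sc that(1)] fin that by auto
    then show "c' t = c t" using that unfolding c'_def by auto
  qed
  have "cinv X v (Suc j) c'"
    unfolding cinv_def
  proof (intro conjI ballI impI)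
    show "c' {} = {{v}}" using inv by (simp add: c'_def cinv_def)
  next
    fix t assume t: "t \<in> X" "card t \<le> Suc j"
    have "c' t \<subseteq> faces_card X (card t + 1) \<and> bd (c' t) = symd {t} (sdsum c (facets t)) \<and>
     enat (card (c' t)) \<le> Mseq X (card t)"
    proof (cases "card t = Suc j")
      case True
      then have "P t (c' t)" using ex[OF t(1) True] t by (simp add: c'_def someI_ex)
      then show ?thesis by (simp add: P_def)
    next
      case False
      then show ?thesis using inv t by (auto simp: c'_def cinv_def)
    qed
    then show "c' t \<subseteq> faces_card X (card t + 1)" "bd (c' t) = symd {t} (sdsum c' (facets t))"
      "enat (card (c' t)) \<le> Mseq X (card t)" using sd_eq[OF t] by auto
  qed
  then show ?thesis by blast
qed

theorem proposition4p1:
  fixes X :: "'a set set" and n k :: nat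
  assumes "pure_complex X n"
    and "k \<le> n - 1" and "n \<ge> 1"
    and "\<forall>j\<le>k. Sys X j > of_nat (j+1) * Mseq X j + 1"
  shows "Crad X k \<le> Mseq X (Suc k)"
proof -
  have sc: "simplicial_complex X" and fX: "finite X" using assms(1) by (auto simp: pure_complex_def)
  have fin: "\<forall>s\<in>X. finite s"
  proof
    fix s assume "s \<in> X"
    then obtain t where "t \<in> X" "s \<subseteq> t" "card t = n + 1" using assms(1) by (auto simp: pure_complex_def)
    then have "finite t" using card.infinite by fastforce
    then show "finite s" using \<open>s \<subseteq> t\<close> finite_subset by blast
  qed
  obtain t where t: "t \<in> X" "card t = n + 1"
    using assms(1) sc by (auto simp: pure_complex_def simplicial_complex_def)
  then have "t \<noteq> {}" by auto
  then obtain v where "v \<in> t" by blast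
  then have vX: "{v} \<in> X" using t sc by (auto simp: simplicial_complex_def)
  have main: "j \<le> Suc k \<Longrightarrow> \<exists>c. cinv X v j c" for j
  proof (induction j)
    case 0
    have "cinv X v 0 (\<lambda>_. {{v}})"
      unfolding cinv_def
    proof (intro conjI ballI impI)
      fix s assume s: "s \<in> X" "card s \<le> 0"
      then have "s = {}" using fin by auto
      then show "{{v}} \<subseteq> faces_card X (card s + 1)"
        "bd {{v}} = symd {s} (sdsum (\<lambda>_. {{v}}) (facets s))"
        "enat (card {{v}}) \<le> Mseq X (card s)"
        using vX by (auto simp: faces_card_def bd_def facets_def symd_def one_enat_def)
    qed simp
    then show ?case by blast
  next
    case (Suc j)
    then obtain c where c: "cinv X v j c" by auto
    have h: "Sys X j > of_nat (j+1) * Mseq X j + 1" using assms(4) Suc by auto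
    have "Mseq X j \<noteq> \<infinity>"
    proof
      assume "Mseq X j = \<infinity>"
      then have "of_nat (j+1) * Mseq X j + 1 = \<infinity>" by (simp add: of_nat_eq_enat)
      then show False using h by simp
    qed
    then obtain m where M: "Mseq X j = enat m" by blast
    have "enat ((j+1)*m+1) < Sys X j" using h M by (simp add: of_nat_eq_enat one_enat_def)
    then show ?case using step[OF sc fX fin c M] by blast
  qed
  obtain c where c: "cinv X v (Suc k) c" using main by blast
  have ct: "c t \<subseteq> faces_card X (card t + 1)" "bd (c t) = symd {t} (sdsum c (facets t))"
      "enat (card (c t)) \<le> Mseq X (card t)" if "t \<in> X" "card t \<le> Suc k" for t
    using c that unfolding cinv_def by auto
  have cone: "cone_function X k v c"
    unfolding cone_function_def
  proof (intro conjI allI impI ballI)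
    show "{v} \<in> X" by (rule vX)
    show "c {} = {{v}}" using c by (simp add: cinv_def)
  next
    fix d s assume "d \<le> k + 1" "s \<in> faces_card X d"
    then show "c s \<subseteq> faces_card X (d + 1)" using ct(1)[of s] by (auto simp: faces_card_def)
  next
    fix j A assume j: "j \<le> k" and A: "A \<subseteq> faces_card X (j + 1)"
    have AX: "A \<subseteq> X" and fA: "finite A" using A fX by (auto simp: faces_card_def intro: finite_subset)
    have cf: "finite (c s)" if "s \<in> A" for s
    proof -
      have "s \<in> X" "card s \<le> Suc k" using A that j by (auto simp: faces_card_def)
      then have "c s \<subseteq> X" using ct(1)[of s] by (auto simp: faces_card_def)
      then show ?thesis using fX finite_subset by blast
    qed
    have "bd (sdsum c A) = symd A (sdsum c (bd A))"
      by (rule bd_lin_chain[OF sc fX fin AX fA cf]) (use ct(2) A j in \<open>auto simp: faces_card_def\<close>)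
    then show "bd (sdsum c A) = A \<union> sdsum c (bd A) - A \<inter> sdsum c (bd A)" by (simp add: symd_def)
  qed
  have "Vol X k c \<le> Mseq X (Suc k)"
    unfolding Vol_def
  proof (rule SUP_least)
    fix t assume "t \<in> faces_card X (k+1)"
    then have "t \<in> X" "card t = Suc k" by (auto simp: faces_card_def)
    then show "enat (card (c t)) \<le> Mseq X (Suc k)" using ct(3)[of t] by simp
  qed
  moreover have "Crad X k \<le> Vol X k c"
    unfolding Crad_def using cone by (intro INF_lower2[of "(v, c)"]) auto
  ultimately show ?thesis by simp
qed

end
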